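(* Let $G,H\colon\mathbb{R}^n\to\mathbb{R}^n$ be selfadjoint linear maps and assume that $$\wedge^k G+\wedge^k H=\beta\wedge^k\mathrm{id}$$ for some constant $\beta\in\mathbb{R}$ with $\beta\neq 0$ and some $k\in\{1,\dots,n-1\}$. Then $G$ and $H$ have a common orthonormal basis of eigenvectors. If $k\ge 2$, then $G$ or $H$ is an isomorphism.
   Context: For a linear map $A$ on $\mathbb{R}^n$, $\wedge^kA$ denotes the induced linear map on the exterior power $\bigwedge^k\mathbb{R}^n$, $(\wedge^kA)(v_1\wedge\dots\wedge v_k)=Av_1\wedge\dots\wedge Av_k$. *)

theory Defs
  imports "HOL-Analysis.Analysis"
begin

definition kdet :: "nat \<Rightarrow> (nat \<Rightarrow> nat \<Rightarrow> real) \<Rightarrow> real" where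
  "kdet k M = (\<Sum>p | p permutes {..<k}. of_int (sign p) * (\<Prod>i<k. M i (p i)))"

(* The k-vector v 0 \<and> ... \<and> v (k-1) in \<And>^k R^n, represented by its coordinates
   as an antisymmetric k-tensor: the coordinate at the index tuple
   (idx 0, ..., idx (k-1)) is det [ (v j) $ (idx l) ]_{l,j<k}.
   This representation of \<And>^k R^n inside the k-fold tensor power is injective and linear. *)
definition wedge :: "nat \<Rightarrow> (nat \<Rightarrow> real^'n) \<Rightarrow> ((nat \<Rightarrow> 'n) \<Rightarrow> real)" where
  "wedge k v = (\<lambda>idx. kdet k (\<lambda>l j. v j $ idx l))"

(* (\<And>^k A) applied to a decomposable k-vector v 0 \<and> ... \<and> v (k-1):
   A v 0 \<and> ... \<and> A v (k-1). *)
definition ext_pow_app :: "nat \<Rightarrow> real^'n^'n \<Rightarrow> (nat \<Rightarrow> real^'n) \<Rightarrow> ((nat \<Rightarrow> 'n) \<Rightarrow> real)" where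
  "ext_pow_app k A v = wedge k (\<lambda>j. A *v v j)"

(* The identity  \<And>^k G + \<And>^k H = \<beta> \<And>^k id  of linear maps on \<And>^k R^n.
   Since decomposable k-vectors span \<And>^k R^n and all maps are linear, this is
   equivalent to equality on all decomposable k-vectors. *)
definition ext_pow_sum_eq :: "nat \<Rightarrow> real^'n^'n \<Rightarrow> real^'n^'n \<Rightarrow> real \<Rightarrow> bool" where
  "ext_pow_sum_eq k G H \<beta> \<longleftrightarrow>
     (\<forall>v. \<forall>idx. ext_pow_app k G v idx + ext_pow_app k H v idx = \<beta> * ext_pow_app k (mat 1) v idx)"

end

theory Submission
  imports Defs "Jordan_Normal_Form.Determinant"
begin

no_notation Matrix.vec_index (infixl "$" 100)
no_notation Matrix.scalar_prod (infix "\<bullet>" 70)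

lemma kdet_jnf: "kdet k M = Determinant.det (Matrix.mat k k (\<lambda>(i,j). M i j))"
  unfolding kdet_def
  by (subst det_def'[of _ k]) (auto simp: lessThan_atLeast0 intro!: sum.cong prod.cong)

lemma laplace_zero:
  fixes x :: "nat \<Rightarrow> nat \<Rightarrow> real"
  assumes j: "j < k"
  shows "(\<Sum>t<Suc k. (-1)^t * x t j * kdet k (\<lambda>l c. x (if l < t then l else Suc l) c)) = 0"
proof -
  define A where "A = Matrix.mat (Suc k) (Suc k) (\<lambda>(i,c). if c = 0 then x i j else x i (c - 1))"
  have Ac: "A \<in> carrier_mat (Suc k) (Suc k)" unfolding A_def by auto
  have "Determinant.det A = 0"
    by (rule det_identical_columns[OF Ac, of 0 "Suc j"]) (use j in \<open>auto simp: A_def Matrix.col_def\<close>)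
  moreover have "Determinant.det A = (\<Sum>t<Suc k. A $$ (t,0) * cofactor A t 0)"
    by (rule laplace_expansion_column[OF Ac]) simp
  moreover have "A $$ (t,0) * cofactor A t 0 = (-1)^t * x t j * kdet k (\<lambda>l c. x (if l < t then l else Suc l) c)" if "t < Suc k" for t
    unfolding cofactor_def kdet_jnf using that
    by (auto simp: A_def mat_delete_def intro!: arg_cong[of _ _ Determinant.det])
  ultimately show ?thesis by simp
qed

lemma kdet_id: "kdet k (\<lambda>l j. if l = j then 1 else 0) = 1"
proof -
  have "Matrix.mat k k (\<lambda>(i,j). if i = j then 1 else (0::real)) = 1\<^sub>m k"
    by (auto simp: one_mat_def)
  then show ?thesis unfolding kdet_jnf by simp
qed

hide_const (open) Matrix.mat Determinant.det Matrix.row Matrix.col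

lemma kdet_cong:
  assumes "\<And>l j. l < k \<Longrightarrow> j < k \<Longrightarrow> M l j = N l j"
  shows "kdet k M = kdet k N"
  unfolding kdet_def
proof (intro sum.cong refl)
  fix p assume "p \<in> {p. p permutes {..<k}}"
  then have "p i < k" if "i < k" for i using permutes_in_image that by fastforce
  then show "of_int (sign p) * (\<Prod>i<k. M i (p i)) = of_int (sign p) * (\<Prod>i<k. N i (p i))"
    using assms by (auto intro!: prod.cong)
qed

lemma kdet_zero_row:
  assumes "l0 < k" "\<And>j. j < k \<Longrightarrow> M l0 j = 0"
  shows "kdet k M = 0"
  unfolding kdet_def
proof (intro sum.neutral ballI)
  fix p assume "p \<in> {p. p permutes {..<k}}"
  then have "p l0 < k" using permutes_in_image assms(1) by fastforce
  then have "(\<Prod>i<k. M i (p i)) = 0"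
    using assms by (intro prod_zero) auto
  then show "of_int (sign p) * (\<Prod>i<k. M i (p i)) = 0" by simp
qed

lemma kdet_scale_cols:
  "kdet k (\<lambda>l j. c j * M l j) = (\<Prod>j<k. c j) * kdet k M"
  unfolding kdet_def sum_distrib_left
proof (intro sum.cong refl)
  fix p assume "p \<in> {p. p permutes {..<k}}"
  then have pp: "p permutes {..<k}" by simp
  have "(\<Prod>i<k. c (p i) * M i (p i)) = (\<Prod>i<k. c (p i)) * (\<Prod>i<k. M i (p i))"
    by (rule prod.distrib)
  also have "(\<Prod>i<k. c (p i)) = (\<Prod>j<k. c j)"
    using prod.permute[OF pp, of c] by (simp add: comp_def)
  finally show "of_int (sign p) * (\<Prod>i<k. c (p i) * M i (p i)) =
      (\<Prod>j<k. c j) * (of_int (sign p) * (\<Prod>i<k. M i (p i)))" by simp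
qed

lemma wedge_action:
  fixes A :: "real^'n^'n"
  shows "wedge k (\<lambda>j. A *v w j) idx =
    (\<Sum>m\<in>PiE {..<k} (\<lambda>_. UNIV). (\<Prod>l<k. A $ idx l $ m l) * wedge k w m)"
proof -
  have "wedge k (\<lambda>j. A *v w j) idx =
     (\<Sum>p | p permutes {..<k}. of_int (sign p) * (\<Prod>i<k. (\<Sum>m\<in>UNIV. A $ idx i $ m * w (p i) $ m)))"
    unfolding wedge_def kdet_def by (simp add: matrix_vector_mult_def)
  also have "\<dots> = (\<Sum>p | p permutes {..<k}. of_int (sign p) *
      (\<Sum>m\<in>PiE {..<k} (\<lambda>_. UNIV). (\<Prod>l<k. A $ idx l $ m l) * (\<Prod>i<k. w (p i) $ m i)))"
    by (subst prod_sum_PiE) (auto simp: prod.distrib)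
  also have "\<dots> = (\<Sum>m\<in>PiE {..<k} (\<lambda>_. UNIV). (\<Prod>l<k. A $ idx l $ m l) *
      (\<Sum>p | p permutes {..<k}. of_int (sign p) * (\<Prod>i<k. w (p i) $ m i)))"
    unfolding sum_distrib_left
    by (subst sum.swap) (auto intro!: sum.cong)
  finally show ?thesis unfolding wedge_def kdet_def .
qed

lemma transfer:
  fixes G H P Q :: "real^'n^'n"
  assumes E: "ext_pow_sum_eq k G H \<beta>" and QP: "Q ** P = mat 1"
  shows "ext_pow_sum_eq k (Q ** G ** P) (Q ** H ** P) \<beta>"
  unfolding ext_pow_sum_eq_def
proof (intro allI)
  fix v :: "nat \<Rightarrow> real^'n" and idx
  let ?X = "\<lambda>m. (\<Prod>l<k. Q $ idx l $ m l)"
  have e1: "ext_pow_app k (Q ** G ** P) v idx = (\<Sum>m\<in>PiE {..<k} (\<lambda>_. UNIV). ?X m * ext_pow_app k G (\<lambda>j. P *v v j) m)"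
    unfolding ext_pow_app_def by (simp add: matrix_vector_mul_assoc[symmetric] wedge_action)
  have e2: "ext_pow_app k (Q ** H ** P) v idx = (\<Sum>m\<in>PiE {..<k} (\<lambda>_. UNIV). ?X m * ext_pow_app k H (\<lambda>j. P *v v j) m)"
    unfolding ext_pow_app_def by (simp add: matrix_vector_mul_assoc[symmetric] wedge_action)
  have "ext_pow_app k (Q ** G ** P) v idx + ext_pow_app k (Q ** H ** P) v idx
     = (\<Sum>m\<in>PiE {..<k} (\<lambda>_. UNIV). ?X m * (\<beta> * wedge k (\<lambda>j. P *v v j) m))"
    unfolding e1 e2 sum.distrib[symmetric] distrib_left[symmetric]
    using E unfolding ext_pow_sum_eq_def ext_pow_app_def by (simp add: matrix_vector_mul_lid)
  also have "\<dots> = \<beta> * wedge k (\<lambda>j. Q *v (P *v v j)) idx"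
    by (simp add: wedge_action sum_distrib_left ac_simps)
  also have "\<dots> = \<beta> * ext_pow_app k (mat 1) v idx"
    by (simp add: ext_pow_app_def matrix_vector_mul_assoc QP matrix_vector_mul_lid)
  finally show "ext_pow_app k (Q ** G ** P) v idx + ext_pow_app k (Q ** H ** P) v idx = \<beta> * ext_pow_app k (mat 1) v idx" .
qed

lemma axis_nth_eq: "axis i (1::real) $ r = (if r = i then 1 else 0)"
  by (simp add: axis_def)

lemma wedge_axes_self:
  assumes "distinct I" "length I = k"
  shows "wedge k (\<lambda>j. axis (I!j) (1::real)) (\<lambda>l. I!l) = 1"
proof -
  have "wedge k (\<lambda>j. axis (I!j) (1::real)) (\<lambda>l. I!l) = kdet k (\<lambda>l j. if l = j then 1 else 0)"
    unfolding wedge_def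
    by (rule kdet_cong) (use assms in \<open>auto simp: axis_nth_eq nth_eq_iff_index_eq\<close>)
  then show ?thesis by (simp add: kdet_id)
qed

lemma wedge_axes_out:
  assumes "l0 < k" "idx l0 \<notin> set I" "length I = k"
  shows "wedge k (\<lambda>j. axis (I!j) (1::real)) idx = 0"
  unfolding wedge_def
  by (rule kdet_zero_row[OF assms(1)]) (use assms in \<open>auto simp: axis_nth_eq\<close>)

lemma ext_pow_diag:
  fixes D :: "real^'n^'n"
  assumes "\<And>i. D *v axis i 1 = g i *\<^sub>R axis i 1"
  shows "ext_pow_app k D (\<lambda>j. axis (I j) 1) idx = (\<Prod>j<k. g (I j)) * wedge k (\<lambda>j. axis (I j) 1) idx"
  unfolding ext_pow_app_def wedge_def assms
  using kdet_scale_cols[where c="\<lambda>j. g (I j)" and k=k and M="\<lambda>l j. axis (I j) 1 $ idx l"] by simp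

lemma matrix_axis_nth: "((A::real^'n^'n) *v axis j 1) $ r = A $ r $ j"
  by (simp add: matrix_vector_mult_basis column_def)

lemma lemmaK:
  fixes D M :: "real^'n^'n"
  assumes D: "\<And>i. D *v axis i 1 = g i *\<^sub>R axis i 1"
    and E: "ext_pow_sum_eq k D M \<beta>"
    and I: "distinct I" "length I = k"
    and c: "\<beta> - (\<Prod>j<k. g (I!j)) \<noteq> 0"
    and r: "r \<notin> set I" and j: "j < k"
  shows "M $ r $ (I!j) = 0"
proof -
  define c where "c = \<beta> - (\<Prod>j<k. g (I!j))"
  define w where "w = (\<lambda>j. M *v axis (I!j) 1)"
  define e where "e = (\<lambda>j. axis (I!j) (1::real))"
  have we: "wedge k w idx = c * wedge k e idx" for idx
  proof -
    have "ext_pow_app k D e idx + ext_pow_app k M e idx = \<beta> * ext_pow_app k (mat 1) e idx"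
      using E unfolding ext_pow_sum_eq_def by blast
    then show ?thesis
      unfolding c_def w_def e_def ext_pow_diag[OF D]
      by (simp add: ext_pow_app_def matrix_vector_mul_lid algebra_simps)
  qed
  define idx' where "idx' = (\<lambda>t. (r # I) ! t)"
  define F where "F = (\<lambda>t. (-1)^t * (w j $ idx' t) * kdet k (\<lambda>l c. w c $ idx' (if l < t then l else Suc l)))"
  have "sum F {..<Suc k} = 0"
    unfolding F_def using laplace_zero[OF j, of "\<lambda>t c. w c $ idx' t"] by simp
  moreover have "sum F {..<Suc k} = F 0 + (\<Sum>t<k. F (Suc t))"
    by (rule sum.lessThan_Suc_shift)
  moreover have kk: "kdet k (\<lambda>l c. w c $ idx' (if l < t then l else Suc l)) =
     c * wedge k e (\<lambda>l. idx' (if l < t then l else Suc l))" for t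
    using we[of "\<lambda>l. idx' (if l < t then l else Suc l)"] unfolding wedge_def by simp
  moreover have "wedge k e (\<lambda>l. idx' (if l < Suc t then l else Suc l)) = 0" for t
    unfolding e_def
    by (rule wedge_axes_out[of 0]) (use j r I in \<open>auto simp: idx'_def\<close>)
  then have "F (Suc t) = 0" for t unfolding F_def kk by simp
  moreover have "wedge k e (\<lambda>l. idx' (if l < 0 then l else Suc l)) = 1"
    unfolding e_def idx'_def using wedge_axes_self[OF I] by simp
  then have "F 0 = w j $ r * c" unfolding F_def kk by (simp add: idx'_def)
  ultimately have "w j $ r * c = 0" by simp
  then have "w j $ r = 0" using c unfolding c_def by simp
  then show ?thesis unfolding w_def matrix_axis_nth .
qed

lemma obtain_list:
  fixes F :: "'n::finite set"
  assumes "m + card F \<le> CARD('n)"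
  obtains xs :: "'n list" where "distinct xs" "length xs = m" "set xs \<inter> F = {}"
proof -
  have "card (UNIV - F) = CARD('n) - card F"
    by (simp add: card_Diff_subset)
  then have "m \<le> card (UNIV - F)" using assms by simp
  then obtain T where T: "T \<subseteq> UNIV - F" "card T = m"
    using obtain_subset_with_card_n by metis
  obtain xs where "set xs = T" "distinct xs" using finite_distinct_list[of T] by auto
  moreover have "length xs = m" using \<open>set xs = T\<close> \<open>distinct xs\<close> T(2) distinct_card by metis
  moreover have "set xs \<inter> F = {}" using \<open>set xs = T\<close> T(1) by blast
  ultimately show ?thesis using that by blast
qed

lemma prod_cons_shift:
  assumes "length xs = k - 1" "1 \<le> k"
  shows "(\<Prod>j<k. g ((a # xs) ! j)) = (g a :: real) * (\<Prod>j<k - 1. g (xs ! j))"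
proof -
  obtain k' where k: "k = Suc k'" using assms by (cases k) auto
  show ?thesis unfolding k by (simp add: prod.lessThan_Suc_shift del: prod.lessThan_Suc)
qed

lemma commute_diag:
  fixes D M :: "real^'n^'n"
  assumes D: "\<And>i. D *v axis i 1 = g i *\<^sub>R axis i 1"
    and E: "ext_pow_sum_eq k D M \<beta>"
    and Ms: "transpose M = M"
    and \<beta>: "\<beta> \<noteq> 0" and k1: "1 \<le> k" and kn: "k \<le> CARD('n) - 1"
    and ab: "a \<noteq> b" "g a \<noteq> g b"
  shows "M $ a $ b = 0"
proof -
  have c2: "card {a, b} = 2" using ab(1) by simp
  have kc: "(k - 1) + card {a, b} \<le> CARD('n)" unfolding c2 using k1 kn by arith
  obtain xs where xs: "distinct xs" "length xs = k - 1" "set xs \<inter> {a,b} = {}"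
    by (rule obtain_list[OF kc])
  define P where "P = (\<Prod>j<k - 1. g (xs ! j))"
  have axs: "a \<notin> set xs" and bxs: "b \<notin> set xs" using xs(3) by blast+
  have lk: "length (b # xs) = k" "length (a # xs) = k" using xs(2) k1 by simp_all
  have I1: "distinct (b # xs)" using xs(1) bxs by simp
  have I2: "distinct (a # xs)" using xs(1) axs by simp
  have p1: "(\<Prod>j<k. g ((b # xs) ! j)) = g b * P" unfolding P_def by (rule prod_cons_shift[OF xs(2) k1])
  have p2: "(\<Prod>j<k. g ((a # xs) ! j)) = g a * P" unfolding P_def by (rule prod_cons_shift[OF xs(2) k1])
  have ra: "a \<notin> set (b # xs)" using ab(1) axs by simp
  have rb: "b \<notin> set (a # xs)" using ab(1) bxs by simp
  have k0: "0 < k" using k1 by simp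
  have Msym: "M $ i $ j = M $ j $ i" for i j
  proof -
    have "transpose M $ j $ i = M $ i $ j" by (simp add: transpose_def)
    then show ?thesis using Ms by simp
  qed
  show ?thesis
  proof (cases "\<beta> - g b * P \<noteq> 0")
    case True
    then have c1: "\<beta> - (\<Prod>j<k. g ((b # xs) ! j)) \<noteq> 0" unfolding p1 .
    have "M $ a $ ((b # xs) ! 0) = 0" by (rule lemmaK[OF D E I1 lk(1) c1 ra k0])
    then show ?thesis by simp
  next
    case False
    show ?thesis
    proof (cases "\<beta> - g a * P \<noteq> 0")
      case True
      then have c1: "\<beta> - (\<Prod>j<k. g ((a # xs) ! j)) \<noteq> 0" unfolding p2 .
      have "M $ b $ ((a # xs) ! 0) = 0" by (rule lemmaK[OF D E I2 lk(2) c1 rb k0])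
      then show ?thesis using Msym[of a b] by simp
    next
      case False2: False
      from False False2 have eq: "g b * P = g a * P" by simp
      have "P \<noteq> 0"
      proof
        assume "P = 0"
        then have "\<beta> = 0" using False by simp
        with \<beta> show False by simp
      qed
      with eq have "g a = g b" by simp
      with ab(2) show ?thesis by blast
    qed
  qed
qed

lemma sym_inner:
  fixes A :: "real^'n^'n"
  assumes "transpose A = A"
  shows "(A *v x) \<bullet> y = x \<bullet> (A *v y)"
  by (metis assms dot_lmul_matrix transpose_matrix_vector)

lemma sym_eigvec:
  fixes A :: "real^'n^'n"
  assumes As: "transpose A = A" and S: "subspace S" and inv: "\<And>x. x \<in> S \<Longrightarrow> A *v x \<in> S"
    and x0: "x0 \<in> S" "x0 \<noteq> 0"
  shows "\<exists>x\<in>S. norm x = 1 \<and> (\<exists>l. A *v x = l *\<^sub>R x)"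
proof -
  define T where "T = S \<inter> sphere 0 1"
  have cT: "compact T" unfolding T_def
    by (intro closed_Int_compact closed_subspace S compact_sphere)
  have "x0 /\<^sub>R norm x0 \<in> T" unfolding T_def using x0 S
    by (auto simp: subspace_scale)
  then have neT: "T \<noteq> {}" by blast
  have cont: "continuous_on T (\<lambda>z. z \<bullet> (A *v z))"
    by (intro continuous_intros matrix_vector_mult_linear_continuous_on)
  obtain x where xT: "x \<in> T" and xmax: "\<And>y. y \<in> T \<Longrightarrow> y \<bullet> (A *v y) \<le> x \<bullet> (A *v x)"
    using continuous_attains_sup[OF cT neT cont] by blast
  define l where "l = x \<bullet> (A *v x)"
  have xS: "x \<in> S" and nx: "norm x = 1" using xT by (auto simp: T_def)
  have xx: "x \<bullet> x = 1" using nx by (simp add: dot_square_norm)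
  have q: "z \<bullet> (A *v z) \<le> l * (z \<bullet> z)" if zS: "z \<in> S" for z
  proof (cases "z = 0")
    case True then show ?thesis by simp
  next
    case False
    define c where "c = 1 / norm z"
    have "c *\<^sub>R z \<in> T" unfolding T_def c_def using zS S False
      by (auto simp: subspace_scale)
    then have "(c *\<^sub>R z) \<bullet> (A *v (c *\<^sub>R z)) \<le> l" using xmax l_def by blast
    then have "c * c * (z \<bullet> (A *v z)) \<le> l" by (simp add: matrix_vector_mult_scaleR)
    moreover have "c * c * (z \<bullet> z) = 1" unfolding c_def using False
      by (simp add: dot_square_norm power2_eq_square)
    moreover have "c * c > 0" unfolding c_def using False by simp
    ultimately have "c * c * (z \<bullet> (A *v z)) \<le> c * c * (l * (z \<bullet> z))"
      by (metis mult.assoc mult.commute mult.right_neutral)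
    then show ?thesis using \<open>c * c > 0\<close> mult_le_cancel_left_pos by blast
  qed
  define u where "u = l *\<^sub>R x - A *v x"
  have uS: "u \<in> S" unfolding u_def using S xS inv
    by (simp add: subspace_diff subspace_scale)
  have "u = 0"
  proof (rule ccontr)
    assume "u \<noteq> 0"
    define d where "d = u \<bullet> u"
    have dpos: "d > 0" unfolding d_def using \<open>u \<noteq> 0\<close> by simp
    define cc where "cc = l * (u \<bullet> u) - u \<bullet> (A *v u)"
    have ccpos: "cc \<ge> 0" using q[OF uS] unfolding cc_def by simp
    define s where "s = d / (cc + 1)"
    have spos: "s > 0" unfolding s_def using dpos ccpos by simp
    define z where "z = x - s *\<^sub>R u"
    have zS: "z \<in> S" unfolding z_def using S xS uS by (simp add: subspace_diff subspace_scale)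
    have sx: "x \<bullet> (A *v u) = u \<bullet> (A *v x)"
      using sym_inner[OF As, of x u] by (simp add: inner_commute)
    have uAx: "u \<bullet> (A *v x) = l * (u \<bullet> x) - d"
      unfolding d_def by (simp add: u_def inner_diff_left inner_diff_right algebra_simps inner_commute)
    have e1: "z \<bullet> (A *v z) = l - 2 * s * (u \<bullet> (A *v x)) + s * s * (u \<bullet> (A *v u))"
      unfolding z_def using sx
      by (simp add: matrix_vector_mult_diff_distrib matrix_vector_mult_scaleR inner_diff_left inner_diff_right
          l_def algebra_simps inner_commute)
    have e2: "z \<bullet> z = 1 - 2 * s * (u \<bullet> x) + s * s * d"
      unfolding z_def d_def using xx by (simp add: inner_diff_left inner_diff_right algebra_simps inner_commute)
    have "z \<bullet> (A *v z) \<le> l * (z \<bullet> z)" using q[OF zS] .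
    then have "2 * s * d \<le> s * s * cc"
      unfolding e1 e2 uAx cc_def d_def by (simp add: algebra_simps)
    then have "2 * d \<le> s * cc" using spos by (simp add: power2_eq_square mult.assoc)
    moreover have "s * cc < d"
    proof -
      have "s * cc = d * (cc / (cc + 1))" unfolding s_def by simp
      also have "\<dots> < d * 1" using dpos ccpos by (intro mult_strict_left_mono) auto
      finally show ?thesis by simp
    qed
    ultimately show False using dpos by simp
  qed
  then have "A *v x = l *\<^sub>R x" unfolding u_def by simp
  then show ?thesis using xS nx by blast
qed

hide_const (open) Matrix.orthogonal


lemma common_basis_sub:
  fixes G H :: "real^'n^'n"
  assumes Gs: "transpose G = G" and Hs: "transpose H = H" and GH: "G ** H = H ** G"
  shows "subspace S \<Longrightarrow> (\<forall>x\<in>S. G *v x \<in> S) \<Longrightarrow> (\<forall>x\<in>S. H *v x \<in> S) \<Longrightarrow>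
    \<exists>B. B \<subseteq> S \<and> pairwise orthogonal B \<and>
      (\<forall>x\<in>B. norm x = 1 \<and> (\<exists>c. G *v x = c *\<^sub>R x) \<and> (\<exists>c. H *v x = c *\<^sub>R x)) \<and> span B = S"
proof (induction "dim S" arbitrary: S rule: less_induct)
  case less
  note S = less.prems(1) and GS = less.prems(2) and HS = less.prems(3)
  show ?case
  proof (cases "S = {0}")
    case True
    then show ?thesis by (intro exI[of _ "{}"]) auto
  next
    case False
    then obtain x0 where x0: "x0 \<in> S" "x0 \<noteq> 0" using S subspace_0 by blast
    obtain x where xS: "x \<in> S" and nx: "norm x = 1" and "\<exists>l. G *v x = l *\<^sub>R x"
      using sym_eigvec[OF Gs S _ x0] GS by blast
    then obtain l where xl: "G *v x = l *\<^sub>R x" by blast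
    define E where "E = {y \<in> S. G *v y = l *\<^sub>R y}"
    have subE: "subspace E"
      unfolding subspace_def
    proof (intro conjI ballI allI)
      show "0 \<in> E" unfolding E_def using S by (simp add: subspace_0)
    next
      fix u v assume "u \<in> E" "v \<in> E"
      then show "u + v \<in> E" unfolding E_def using S
        by (simp add: subspace_add matrix_vector_right_distrib scaleR_add_right)
    next
      fix c :: real and u assume "u \<in> E"
      then show "c *\<^sub>R u \<in> E" unfolding E_def using S
        by (simp add: subspace_scale matrix_vector_mult_scaleR)
    qed
    have HE: "H *v y \<in> E" if "y \<in> E" for y
    proof -
      have "G *v (H *v y) = (H ** G) *v y" using GH by (simp add: matrix_vector_mul_assoc)
      also have "\<dots> = H *v (G *v y)" by (simp add: matrix_vector_mul_assoc)
      also have "\<dots> = l *\<^sub>R (H *v y)" using that unfolding E_def by (simp add: matrix_vector_mult_scaleR)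
      finally show ?thesis using that HS unfolding E_def by auto
    qed
    have xE: "x \<in> E" "x \<noteq> 0" using xS xl nx unfolding E_def by auto
    obtain y where yE: "y \<in> E" and ny: "norm y = 1" and "\<exists>m. H *v y = m *\<^sub>R y"
      using sym_eigvec[OF Hs subE HE xE] by blast
    then obtain m where ym: "H *v y = m *\<^sub>R y" by blast
    have yS: "y \<in> S" and yl: "G *v y = l *\<^sub>R y" using yE unfolding E_def by auto
    have yy: "y \<bullet> y = 1" using ny by (simp add: dot_square_norm)
    define S' where "S' = {z \<in> S. z \<bullet> y = 0}"
    have subS': "subspace S'"
      unfolding subspace_def
    proof (intro conjI ballI allI)
      show "0 \<in> S'" unfolding S'_def using S by (simp add: subspace_0)
    next
      fix u v assume "u \<in> S'" "v \<in> S'"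
      then show "u + v \<in> S'" unfolding S'_def using S
        by (simp add: subspace_add inner_add_left)
    next
      fix c :: real and u assume "u \<in> S'"
      then show "c *\<^sub>R u \<in> S'" unfolding S'_def using S
        by (simp add: subspace_scale)
    qed
    have GS': "\<forall>z\<in>S'. G *v z \<in> S'"
    proof
      fix z assume z: "z \<in> S'"
      have "(G *v z) \<bullet> y = z \<bullet> (G *v y)" by (rule sym_inner[OF Gs])
      also have "\<dots> = 0" using z yl unfolding S'_def by simp
      finally show "G *v z \<in> S'" using z GS unfolding S'_def by auto
    qed
    have HS': "\<forall>z\<in>S'. H *v z \<in> S'"
    proof
      fix z assume z: "z \<in> S'"
      have "(H *v z) \<bullet> y = z \<bullet> (H *v y)" by (rule sym_inner[OF Hs])
      also have "\<dots> = 0" using z ym unfolding S'_def by simp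
      finally show "H *v z \<in> S'" using z HS unfolding S'_def by auto
    qed
    have "y \<notin> S'" using yy unfolding S'_def by simp
    have "S' \<subseteq> S" unfolding S'_def by blast
    then have "S' \<subset> S" using yS \<open>y \<notin> S'\<close> by blast
    moreover have sp: "span S' = S'" "span S = S" using subS' S by (simp_all add: span_eq_iff)
    ultimately have "span S' \<subset> span S" by (simp only: sp)
    then have "dim S' < dim S" by (rule dim_psubset)
    from less.hyps[OF this subS' GS' HS'] obtain B' where B':
      "B' \<subseteq> S'" "pairwise orthogonal B'"
      "\<forall>x\<in>B'. norm x = 1 \<and> (\<exists>c. G *v x = c *\<^sub>R x) \<and> (\<exists>c. H *v x = c *\<^sub>R x)" "span B' = S'"
      by blast
    define B where "B = insert y B'"
    have "B \<subseteq> S" unfolding B_def using B'(1) yS unfolding S'_def by auto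
    moreover have "pairwise orthogonal B"
      unfolding B_def pairwise_insert
      using B'(1,2) unfolding S'_def by (auto simp: real_inner_class.orthogonal_def inner_commute)
    moreover have "\<forall>x\<in>B. norm x = 1 \<and> (\<exists>c. G *v x = c *\<^sub>R x) \<and> (\<exists>c. H *v x = c *\<^sub>R x)"
      unfolding B_def using B'(3) ny yl ym by blast
    moreover have "span B = S"
    proof
      show "span B \<subseteq> S" using \<open>B \<subseteq> S\<close> S by (simp add: span_minimal)
      show "S \<subseteq> span B"
      proof
        fix z assume z: "z \<in> S"
        have "z - (z \<bullet> y) *\<^sub>R y \<in> S'"
          unfolding S'_def using z yS S yy
          by (auto simp: subspace_diff subspace_scale inner_diff_left)
        then have "z - (z \<bullet> y) *\<^sub>R y \<in> span B" using B'(4) span_mono[of B' B] unfolding B_def by blast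
        moreover have "(z \<bullet> y) *\<^sub>R y \<in> span B" unfolding B_def by (simp add: span_base span_scale)
        ultimately have "(z - (z \<bullet> y) *\<^sub>R y) + (z \<bullet> y) *\<^sub>R y \<in> span B" by (rule span_add)
        then show "z \<in> span B" by simp
      qed
    qed
    ultimately show ?thesis by blast
  qed
qed

lemma common_basis:
  fixes G H :: "real^'n^'n"
  assumes Gs: "transpose G = G" and Hs: "transpose H = H" and GH: "G ** H = H ** G"
  shows "\<exists>b :: 'n \<Rightarrow> real^'n.
            (\<forall>i j. b i \<bullet> b j = (if i = j then 1 else 0)) \<and>
            (\<forall>i. \<exists>c. G *v b i = c *\<^sub>R b i) \<and>
            (\<forall>i. \<exists>\<mu>. H *v b i = \<mu> *\<^sub>R b i)"
proof -
  obtain B where B: "pairwise orthogonal B"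
      "\<forall>x\<in>B. norm x = 1 \<and> (\<exists>c. G *v x = c *\<^sub>R x) \<and> (\<exists>c. H *v x = c *\<^sub>R x)" "span B = UNIV"
  proof -
    have "\<exists>B. B \<subseteq> UNIV \<and> pairwise orthogonal B \<and>
      (\<forall>x\<in>B. norm x = 1 \<and> (\<exists>c. G *v x = c *\<^sub>R x) \<and> (\<exists>c. H *v x = c *\<^sub>R x)) \<and> span B = UNIV"
      by (rule common_basis_sub[OF Gs Hs GH]) simp_all
    then show ?thesis using that by blast
  qed
  have "0 \<notin> B"
  proof
    assume "0 \<in> B"
    then have "norm (0::real^'n) = 1" using B(2) by blast
    then show False by simp
  qed
  then have ind: "independent B" using B(1) pairwise_orthogonal_independent by blast
  then have fin: "finite B" by (rule finiteI_independent)
  have "card B = dim (span B)" using dim_span_eq_card_independent[OF ind] by simp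
  also have "\<dots> = CARD('n)" using B(3) by simp
  finally have "card (UNIV :: 'n set) = card B" by simp
  then obtain h where h: "bij_betw h (UNIV :: 'n set) B"
    using finite_same_card_bij[OF finite_class.finite_UNIV fin] by blast
  have hB: "h i \<in> B" for i using h unfolding bij_betw_def by blast
  have hinj: "h i \<noteq> h j" if "i \<noteq> j" for i j using h that unfolding bij_betw_def inj_on_def by blast
  show ?thesis
  proof (intro exI[of _ h] conjI allI)
    fix i j
    show "h i \<bullet> h j = (if i = j then 1 else 0)"
    proof (cases "i = j")
      case True
      then show ?thesis using B(2) hB[of i] by (simp add: dot_square_norm)
    next
      case False
      then have "orthogonal (h i) (h j)" using B(1) hB hinj unfolding pairwise_def by blast
      then show ?thesis using False by (simp add: real_inner_class.orthogonal_def)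
    qed
  next
    fix i show "\<exists>c. G *v h i = c *\<^sub>R h i" using B(2) hB by blast
  next
    fix i show "\<exists>c. H *v h i = c *\<^sub>R h i" using B(2) hB by blast
  qed
qed

lemma P_axis:
  fixes b :: "'n \<Rightarrow> real^'n"
  shows "(\<chi> r i. b i $ r) *v axis i 1 = b i"
  unfolding Finite_Cartesian_Product.vec_eq_iff by (simp add: matrix_axis_nth)

lemma PT_apply:
  fixes b :: "'n \<Rightarrow> real^'n"
  shows "transpose (\<chi> r i. b i $ r) *v v = (\<chi> j. b j \<bullet> v)"
  unfolding Finite_Cartesian_Product.vec_eq_iff by (simp add: matrix_vector_mult_def transpose_def inner_vec_def)

lemma basis_props:
  fixes b :: "'n \<Rightarrow> real^'n"
  assumes ortho: "\<forall>i j. b i \<bullet> b j = (if i = j then 1 else 0)"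
  defines "P \<equiv> (\<chi> r i. b i $ r)"
  shows "transpose P *v b i = axis i 1" "transpose P ** P = mat 1" "P ** transpose P = mat 1"
proof -
  show bi: "transpose P *v b i = axis i 1" for i
    unfolding P_def PT_apply Finite_Cartesian_Product.vec_eq_iff using ortho by (simp add: axis_def)
  show TPP: "transpose P ** P = mat 1"
  proof -
    have "(transpose P ** P) $ r $ j = mat 1 $ r $ j" for r j
    proof -
      have "(transpose P ** P) $ r $ j = ((transpose P ** P) *v axis j 1) $ r" by (simp add: matrix_axis_nth)
      also have "\<dots> = (transpose P *v b j) $ r"
        by (simp add: matrix_vector_mul_assoc[symmetric] P_def P_axis)
      also have "\<dots> = axis j 1 $ r" by (simp only: bi)
      also have "\<dots> = mat 1 $ r $ j" by (simp add: axis_def Finite_Cartesian_Product.mat_def)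
      finally show ?thesis .
    qed
    then show ?thesis unfolding Finite_Cartesian_Product.vec_eq_iff by simp
  qed
  show "P ** transpose P = mat 1" using TPP matrix_left_right_inverse by blast
qed

lemma diag_eigen:
  fixes A :: "real^'n^'n" and b :: "'n \<Rightarrow> real^'n"
  assumes "\<And>i. A *v b i = a i *\<^sub>R b i" and "\<And>i. transpose P *v b i = axis i 1"
    and "P = (\<chi> r i. b i $ r)"
  shows "(transpose P ** A ** P) *v axis i 1 = a i *\<^sub>R axis i 1"
proof -
  have "(transpose P ** A ** P) *v axis i 1 = transpose P *v (A *v (P *v axis i 1))"
    by (simp add: matrix_vector_mul_assoc matrix_mul_assoc)
  also have "\<dots> = a i *\<^sub>R axis i 1"
    using assms by (simp add: P_axis matrix_vector_mult_scaleR)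
  finally show ?thesis .
qed

lemma diag_entries:
  fixes D :: "real^'n^'n"
  assumes "\<And>i. D *v axis i 1 = g i *\<^sub>R axis i 1"
  shows "D $ r $ i = (if r = i then g i else 0)"
proof -
  have "D $ r $ i = (D *v axis i 1) $ r" by (simp add: matrix_axis_nth)
  also have "\<dots> = (if r = i then g i else 0)" using assms by (simp add: axis_def)
  finally show ?thesis .
qed

lemma diag_comm:
  fixes D M :: "real^'n^'n"
  assumes D: "\<And>i. D *v axis i 1 = g i *\<^sub>R axis i 1"
    and c: "\<And>a b. M $ a $ b * g b = g a * M $ a $ b"
  shows "M ** D = D ** M"
proof -
  have "(M ** D) $ a $ b = (D ** M) $ a $ b" for a b
  proof -
    have "(M ** D) $ a $ b = (\<Sum>c\<in>UNIV. M $ a $ c * D $ c $ b)"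
      by (simp add: matrix_matrix_mult_def)
    also have "\<dots> = (\<Sum>c\<in>UNIV. if c = b then M $ a $ b * g b else 0)"
      by (rule sum.cong) (auto simp: diag_entries[OF D])
    also have "\<dots> = M $ a $ b * g b" by simp
    also have "\<dots> = g a * M $ a $ b" by (rule c)
    also have "\<dots> = (\<Sum>c\<in>UNIV. if c = a then g a * M $ a $ b else 0)" by simp
    also have "\<dots> = (\<Sum>c\<in>UNIV. D $ a $ c * M $ c $ b)"
      by (rule sum.cong) (auto simp: diag_entries[OF D])
    also have "\<dots> = (D ** M) $ a $ b"
      by (simp add: matrix_matrix_mult_def)
    finally show ?thesis .
  qed
  then show ?thesis unfolding Finite_Cartesian_Product.vec_eq_iff by simp
qed

lemma obtain_list2:
  fixes a c :: "'n::finite"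
  assumes "2 \<le> k" "k \<le> CARD('n)"
  obtains I where "distinct I" "length I = k" "a \<in> set I" "c \<in> set I"
proof -
  obtain ys where ys: "set ys = {a, c}" "distinct ys" using finite_distinct_list[of "{a,c}"] by auto
  have ly: "length ys = card {a, c}" using ys distinct_card by metis
  have cF: "card {a, c} \<le> 2" by (simp add: card_insert_le_m1)
  have "(k - card {a, c}) + card {a, c} \<le> CARD('n)" using assms cF by arith
  then obtain xs where xs: "distinct xs" "length xs = k - card {a, c}" "set xs \<inter> {a, c} = {}"
    by (rule obtain_list)
  have "distinct (ys @ xs)" using ys xs by auto
  moreover have "length (ys @ xs) = k" using ly xs(2) cF assms(1) by simp
  moreover have "a \<in> set (ys @ xs)" "c \<in> set (ys @ xs)" using ys by auto
  ultimately show ?thesis using that by blast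
qed

lemma prod_list_zero:
  assumes "a \<in> set I" "length I = k" "g a = (0::real)"
  shows "(\<Prod>j<k. g (I ! j)) = 0"
proof -
  obtain j where "j < length I" "I ! j = a" using assms(1) by (auto simp: in_set_conv_nth)
  then show ?thesis using assms by (intro prod_zero) auto
qed

theorem lemma3p2:
  fixes G H :: "real^'n^'n" and \<beta> :: real and k :: nat
  assumes "transpose G = G" and "transpose H = H"
    and "\<beta> \<noteq> 0"
    and "1 \<le> k" and "k \<le> CARD('n) - 1"
    and "ext_pow_sum_eq k G H \<beta>"
  shows "(\<exists>b :: 'n \<Rightarrow> real^'n.
            (\<forall>i j. b i \<bullet> b j = (if i = j then 1 else 0)) \<and>
            (\<forall>i. \<exists>c. G *v b i = c *\<^sub>R b i) \<and>
            (\<forall>i. \<exists>\<mu>. H *v b i = \<mu> *\<^sub>R b i))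
         \<and> (2 \<le> k \<longrightarrow> invertible G \<or> invertible H)"
proof -
  note Gs = assms(1) and Hs = assms(2) and \<beta> = assms(3) and k1 = assms(4) and kn = assms(5)
    and E = assms(6)
  obtain b0 :: "'n \<Rightarrow> real^'n" where b0o: "\<forall>i j. b0 i \<bullet> b0 j = (if i = j then 1 else 0)"
    and b0e: "\<forall>i. \<exists>c. G *v b0 i = c *\<^sub>R b0 i"
    using common_basis[OF Gs Gs refl] by metis
  obtain g where g: "\<And>i. G *v b0 i = g i *\<^sub>R b0 i"
    using b0e unfolding choice_iff by blast
  define P where "P = (\<chi> r i. b0 i $ r)"
  note bp = basis_props[OF b0o, folded P_def]
  define D where "D = transpose P ** G ** P"
  define M where "M = transpose P ** H ** P"
  have De: "D *v axis i 1 = g i *\<^sub>R axis i 1" for i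
    unfolding D_def by (rule diag_eigen[OF g bp(1) P_def])
  have E': "ext_pow_sum_eq k D M \<beta>" unfolding D_def M_def by (rule transfer[OF E bp(2)])
  have Ms: "transpose M = M" unfolding M_def
    by (simp add: matrix_transpose_mul matrix_mul_assoc Hs)
  have cm: "M $ a $ b * g b = g a * M $ a $ b" for a b
  proof (cases "a = b \<or> g a = g b")
    case True then show ?thesis by auto
  next
    case False
    then have "M $ a $ b = 0" using commute_diag[OF De E' Ms \<beta> k1 kn] by blast
    then show ?thesis by simp
  qed
  have MD: "M ** D = D ** M" by (rule diag_comm[OF De cm])
  have TPPX: "transpose P ** (P ** X) = X" for X :: "real^'n^'n"
    by (simp add: matrix_mul_assoc bp(2) matrix_mul_lid)
  have conj: "(P ** A ** transpose P) ** (P ** B ** transpose P) = P ** (A ** B) ** transpose P" for A B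
    by (simp add: matrix_mul_assoc[symmetric] TPPX)
  have Geq: "G = P ** D ** transpose P"
    unfolding D_def by (simp add: matrix_mul_assoc bp(3) matrix_mul_lid)
      (simp add: matrix_mul_assoc[symmetric] bp(3) matrix_mul_rid)
  have Heq: "H = P ** M ** transpose P"
    unfolding M_def by (simp add: matrix_mul_assoc bp(3) matrix_mul_lid)
      (simp add: matrix_mul_assoc[symmetric] bp(3) matrix_mul_rid)
  have GH: "G ** H = H ** G"
  proof -
    have "G ** H = P ** (D ** M) ** transpose P" by (subst Geq, subst Heq, rule conj)
    also have "\<dots> = P ** (M ** D) ** transpose P" by (simp add: MD)
    also have "\<dots> = H ** G" by (subst Geq, subst Heq, rule conj[symmetric])
    finally show ?thesis .
  qed
  obtain b :: "'n \<Rightarrow> real^'n" where bo: "\<forall>i j. b i \<bullet> b j = (if i = j then 1 else 0)"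
    and be: "\<forall>i. \<exists>c. G *v b i = c *\<^sub>R b i" and bh: "\<forall>i. \<exists>\<mu>. H *v b i = \<mu> *\<^sub>R b i"
    using common_basis[OF Gs Hs GH] by metis
  have part2: "invertible G \<or> invertible H" if k2: "2 \<le> k"
  proof (rule ccontr)
    assume ni: "\<not> (invertible G \<or> invertible H)"
    obtain g' where g': "\<And>i. G *v b i = g' i *\<^sub>R b i" using be unfolding choice_iff by blast
    obtain h' where h': "\<And>i. H *v b i = h' i *\<^sub>R b i" using bh unfolding choice_iff by blast
    define Q where "Q = (\<chi> r i. b i $ r)"
    note bq = basis_props[OF bo, folded Q_def]
    define DG where "DG = transpose Q ** G ** Q"
    define DH where "DH = transpose Q ** H ** Q"
    have DGe: "DG *v axis i 1 = g' i *\<^sub>R axis i 1" for i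
      unfolding DG_def by (rule diag_eigen[OF g' bq(1) Q_def])
    have DHe: "DH *v axis i 1 = h' i *\<^sub>R axis i 1" for i
      unfolding DH_def by (rule diag_eigen[OF h' bq(1) Q_def])
    have E'': "ext_pow_sum_eq k DG DH \<beta>" unfolding DG_def DH_def by (rule transfer[OF E bq(2)])
    have "det G = 0" using ni invertible_det_nz by blast
    then have "det DG = 0" unfolding DG_def by (simp add: det_mul)
    moreover have "det DG = (\<Prod>i\<in>UNIV. g' i)"
      by (subst det_diagonal) (simp_all add: diag_entries[OF DGe])
    ultimately obtain a where a: "g' a = 0" by auto
    have "det H = 0" using ni invertible_det_nz by blast
    then have "det DH = 0" unfolding DH_def by (simp add: det_mul)
    moreover have "det DH = (\<Prod>i\<in>UNIV. h' i)"
      by (subst det_diagonal) (simp_all add: diag_entries[OF DHe])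
    ultimately obtain c where c: "h' c = 0" by auto
    have kN: "k \<le> CARD('n)" using kn by simp
    obtain I where I: "distinct I" "length I = k" "a \<in> set I" "c \<in> set I"
      using obtain_list2[OF k2 kN] by blast
    let ?v = "\<lambda>j. axis (I ! j) (1::real)"
    have "ext_pow_app k DG ?v ((!) I) + ext_pow_app k DH ?v ((!) I) = \<beta> * ext_pow_app k (mat 1) ?v ((!) I)"
      using E'' unfolding ext_pow_sum_eq_def by blast
    moreover have "ext_pow_app k DG ?v ((!) I) = 0"
      unfolding ext_pow_diag[OF DGe] using prod_list_zero[OF I(3) I(2), of g'] a by simp
    moreover have "ext_pow_app k DH ?v ((!) I) = 0"
      unfolding ext_pow_diag[OF DHe] using prod_list_zero[OF I(4) I(2), of h'] c by simp
    moreover have "ext_pow_app k (mat 1) ?v ((!) I) = 1"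
      unfolding ext_pow_app_def matrix_vector_mul_lid using wedge_axes_self[OF I(1,2)] by simp
    ultimately show False using \<beta> by simp
  qed
  show ?thesis using bo be bh part2 by blast
qed

end
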